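(* Let $G=(V,E)$ be an $r$-regular graph on a finite vertex set $V$ with $|V|$ even, and let $d\mapsto\{H(d),A(d)\}$, $d\in\{1,\dots,r\}$, be a HAP table. Then $P(G,HA)$ is non-empty if and only if there exists $v\in\overline{\mathbf N}(PM(V))$ such that $v|_K=\chi_E$ and $v(c)=|\{d\in\{1,\dots,r\}: \{H(d),A(d)\}=c\}|$ for every $c\in C$.
   Context: Let $V$ be a finite set with $|V|$ even. $K=\binom{V}{2}$ is the set of 2-element subsets of $V$. An equal partition of $V$ is an unordered pair $\{H,A\}$ of disjoint subsets with $H\cup A=V$ and $|H|=|A|=|V|/2$; $C=C(V)$ is the set of equal partitions. For $c=\{H,A\}\in C$, $B_c$ is the complete bipartite graph with parts $H$ and $A$. Vectors live in $\mathbb N^{K\cup C}$ with $\mathbb N=\{0,1,2,\dots\}$; $v|_K$ denotes the restriction to coordinates in $K$. For $E\subseteq K$, $\chi_E\in\{0,1\}^K$ is its indicator vector. For $E\subseteq K$ and $c\in C$, $\chi_{E,c}\in\mathbb N^{K\cup C}$ has $K$-components $\chi_E$ and $C$-components equal to the indicator of $c$. $PM(V)=\{\chi_{q,c}: c\in C,\ q\text{ a perfect matching of }B_c\}$. For $\mathcal M\subseteq\mathbb N^{K\cup C}$, $\mathbf N(\mathcal M)$ is the set of finite nonnegative integer combinations of elements of $\mathcal M$, and $\overline{\mathbf N}(\mathcal M)=\{v\in\mathbb N^{K\cup C}: kv\in\mathbf N(\mathcal M)\text{ for some integer }k\ge1\}$. For an $r$-regular graph $G=(V,E)$, a HAP table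 is a map assigning to each $d\in\{1,\dots,r\}$ an equal partition $\{H(d),A(d)\}\in C$. $P(G,HA)$ is the set of real vectors $(x_{e,d})_{e\in K,\,d\in\{1,\dots,r\}}$ satisfying: (1) $\sum_{d=1}^r x_{e,d}=1$ for every $e\in E$, and $x_{e,d}=0$ for every $e\in K\setminus E$ and every $d$; (2) for every $d$ and every $a\in V$, $\sum_{b\in V\setminus\{a\}}x_{\{a,b\},d}=1$; (3) $0\le x_{e,d}\le1$ for all $e\in E$ and all $d$; (4) $x_{\{a,b\},d}=0$ whenever $\{a,b\}\in E$ and $a,b$ are both in $H(d)$ or both in $A(d)$. *)

theory Defs
  imports Complex_Main
begin

definition pairsK :: "'a set \<Rightarrow> 'a set set" where
  "pairsK V = {e. \<exists>a b. a \<in> V \<and> b \<in> V \<and> a \<noteq> b \<and> e = {a, b}}"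

text \<open>C(V): equal partitions, an unordered pair {H,A} represented as the set {H,A}.\<close>
definition eq_parts :: "'a set \<Rightarrow> 'a set set set" where
  "eq_parts V = {{H, A} | H A. H \<inter> A = {} \<and> H \<union> A = V
                 \<and> card H = card V div 2 \<and> card A = card V div 2}"

definition bip_edges :: "'a set set \<Rightarrow> 'a set set" where
  "bip_edges c = {{a, b} | a b. \<exists>H A. c = {H, A} \<and> H \<inter> A = {} \<and> a \<in> H \<and> b \<in> A}"

definition perfect_matching_of :: "'a set \<Rightarrow> 'a set set \<Rightarrow> 'a set set \<Rightarrow> bool" where
  "perfect_matching_of V c q \<longleftrightarrow> q \<subseteq> bip_edges c \<and> (\<forall>x\<in>V. \<exists>!e. e \<in> q \<and> x \<in> e)"

text \<open>Vectors in N^(K \<union> C): functions on the disjoint sum of coordinates, zero outside K \<union> C.\<close>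
type_synonym 'a vec = "('a set + 'a set set) \<Rightarrow> nat"

definition coordsKC :: "'a set \<Rightarrow> ('a set + 'a set set) set" where
  "coordsKC V = Inl ` pairsK V \<union> Inr ` eq_parts V"

definition is_vec :: "'a set \<Rightarrow> 'a vec \<Rightarrow> bool" where
  "is_vec V v \<longleftrightarrow> (\<forall>i. i \<notin> coordsKC V \<longrightarrow> v i = 0)"

definition chiEc :: "'a set \<Rightarrow> 'a set set \<Rightarrow> 'a set set \<Rightarrow> 'a vec" where
  "chiEc V E c = (\<lambda>i. case i of
       Inl e \<Rightarrow> (if e \<in> pairsK V \<and> e \<in> E then 1 else 0)
     | Inr c' \<Rightarrow> (if c' \<in> eq_parts V \<and> c' = c then 1 else 0))"

definition PM :: "'a set \<Rightarrow> 'a vec set" where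
  "PM V = {chiEc V q c | q c. c \<in> eq_parts V \<and> perfect_matching_of V c q}"

definition Ncomb :: "'a vec set \<Rightarrow> 'a vec set" where
  "Ncomb M = {v. \<exists>S f. finite S \<and> S \<subseteq> M \<and> v = (\<lambda>i. \<Sum>m\<in>S. f m * m i)}"

definition Nbar :: "'a set \<Rightarrow> 'a vec set \<Rightarrow> 'a vec set" where
  "Nbar V M = {v. is_vec V v \<and> (\<exists>k::nat. k \<ge> 1 \<and> (\<lambda>i. k * v i) \<in> Ncomb M)}"

definition regular_graph :: "'a set \<Rightarrow> 'a set set \<Rightarrow> nat \<Rightarrow> bool" where
  "regular_graph V E r \<longleftrightarrow> E \<subseteq> pairsK V \<and> (\<forall>a\<in>V. card {e\<in>E. a \<in> e} = r)"

definition HAP_table :: "'a set \<Rightarrow> nat \<Rightarrow> (nat \<Rightarrow> 'a set) \<Rightarrow> (nat \<Rightarrow> 'a set) \<Rightarrow> bool" where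
  "HAP_table V r H A \<longleftrightarrow> (\<forall>d\<in>{1..r}. {H d, A d} \<in> eq_parts V \<and> H d \<inter> A d = {} \<and> H d \<union> A d = V)"

definition P_GHA :: "'a set \<Rightarrow> 'a set set \<Rightarrow> nat \<Rightarrow> (nat \<Rightarrow> 'a set) \<Rightarrow> (nat \<Rightarrow> 'a set)
    \<Rightarrow> ('a set \<Rightarrow> nat \<Rightarrow> real) set" where
  "P_GHA V E r H A = {x.
     (\<forall>e\<in>E. (\<Sum>d=1..r. x e d) = 1) \<and>
     (\<forall>e\<in>pairsK V - E. \<forall>d\<in>{1..r}. x e d = 0) \<and>
     (\<forall>d\<in>{1..r}. \<forall>a\<in>V. (\<Sum>b\<in>V - {a}. x {a, b} d) = 1) \<and>
     (\<forall>e\<in>E. \<forall>d\<in>{1..r}. 0 \<le> x e d \<and> x e d \<le> 1) \<and>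
     (\<forall>a b d. {a, b} \<in> E \<and> d \<in> {1..r} \<and>
        ((a \<in> H d \<and> b \<in> H d) \<or> (a \<in> A d \<and> b \<in> A d)) \<longrightarrow> x {a, b} d = 0)}"

end

theory Submission
  imports Defs
begin


lemma hall_aux:
  "finite I \<Longrightarrow> card I = n \<Longrightarrow> (\<forall>i\<in>I. finite (S i)) \<Longrightarrow>
   (\<forall>J\<subseteq>I. card J \<le> card (\<Union>(S ` J))) \<Longrightarrow>
   \<exists>f. inj_on f I \<and> (\<forall>i\<in>I. f i \<in> S i)"
proof (induction n arbitrary: I S rule: less_induct)
  case (less n)
  show ?case
  proof (cases "I = {}")
    case True then show ?thesis by auto
  next
    case False
    show ?thesis
    proof (cases "\<forall>J. J \<subseteq> I \<and> J \<noteq> {} \<and> J \<noteq> I \<longrightarrow> card J < card (\<Union>(S ` J))")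
      case True
      from False obtain i where i: "i \<in> I" by auto
      have "card {i} \<le> card (\<Union>(S ` {i}))" using less.prems(4) i by blast
      hence "S i \<noteq> {}" by auto
      then obtain x where x: "x \<in> S i" by auto
      define I' where "I' = I - {i}"
      define S' where "S' = (\<lambda>j. S j - {x})"
      have cI': "card I' < n" unfolding I'_def using card_Diff1_less[OF less.prems(1) i] less.prems(2) by simp
      have fin': "\<forall>j\<in>I'. finite (S' j)" using less.prems(3) unfolding I'_def S'_def by auto
      have hall': "\<forall>J\<subseteq>I'. card J \<le> card (\<Union>(S' ` J))"
      proof (intro allI impI)
        fix J assume J: "J \<subseteq> I'"
        show "card J \<le> card (\<Union>(S' ` J))"
        proof (cases "J = {}")
          case True then show ?thesis by simp
        next
          case False
          have "J \<noteq> I" using J i unfolding I'_def by auto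
          moreover have "J \<subseteq> I" using J unfolding I'_def by auto
          ultimately have lt: "card J < card (\<Union>(S ` J))" using True False by blast
          have fJ0: "finite J" using \<open>J \<subseteq> I\<close> less.prems(1) by (rule finite_subset)
          have fU: "finite (\<Union>(S ` J))" using fJ0 \<open>J \<subseteq> I\<close> less.prems(3) by blast
          have eq: "\<Union>(S' ` J) = \<Union>(S ` J) - {x}" unfolding S'_def by auto
          have "card (\<Union>(S ` J)) - 1 \<le> card (\<Union>(S ` J) - {x})"
            using fU by (simp add: card_Diff_singleton_if)
          then show ?thesis unfolding eq using lt by linarith
        qed
      qed
      obtain f' where f': "inj_on f' I'" "\<forall>j\<in>I'. f' j \<in> S' j"
        using less.IH[OF cI' _ refl fin' hall'] less.prems(1) unfolding I'_def by auto
      define f where "f = f'(i := x)"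
      have "inj_on f I"
      proof -
        have "inj_on f I'" using f'(1) unfolding f_def I'_def inj_on_def by auto
        moreover have "f i \<notin> f ` I'" using f'(2) unfolding f_def S'_def I'_def by auto
        moreover have "i \<notin> I'" unfolding I'_def by blast
        ultimately have "inj_on f (insert i I')" by (simp add: inj_on_insert)
        moreover have "I = insert i I'" using i unfolding I'_def by blast
        ultimately show ?thesis by simp
      qed
      moreover have "\<forall>j\<in>I. f j \<in> S j" using f'(2) x unfolding f_def S'_def I'_def by auto
      ultimately show ?thesis by blast
    next
      case False
      then obtain J where J0: "J \<subseteq> I" "J \<noteq> {}" "J \<noteq> I" "\<not> card J < card (\<Union>(S ` J))" by blast
      hence J: "J \<subseteq> I" "J \<noteq> {}" "J \<noteq> I" "card (\<Union>(S ` J)) \<le> card J" by simp_all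
      define N where "N = \<Union>(S ` J)"
      have fJ: "finite J" using J(1) less.prems(1) finite_subset by blast
      have fN: "finite N" unfolding N_def using fJ J(1) less.prems(3) by auto
      have "J \<subset> I" using J(1,3) by blast
      hence cJ: "card J < n" using psubset_card_mono[OF less.prems(1)] less.prems(2) by blast
      have eqN: "card N = card J" using J(4) less.prems(4) J(1) unfolding N_def by (simp add: le_antisym)
      have hJ1: "\<forall>j\<in>J. finite (S j)" using less.prems(3) J(1) by blast
      have hJ2: "\<forall>K\<subseteq>J. card K \<le> card (\<Union>(S ` K))" using less.prems(4) J(1) by blast
      obtain g where g: "inj_on g J" "\<forall>j\<in>J. g j \<in> S j"
        using less.IH[OF cJ fJ refl hJ1 hJ2] by blast
      define I2 where "I2 = I - J"
      define S2 where "S2 = (\<lambda>j. S j - N)"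
      have c2: "card I2 = card I - card J" unfolding I2_def using fJ J(1) by (simp add: card_Diff_subset)
      have c3: "card J > 0" using fJ J(2) by (simp add: card_gt_0_iff)
      have c4: "card J \<le> card I" using J(1) less.prems(1) by (simp add: card_mono)
      have cI2: "card I2 < n" using c2 c3 c4 less.prems(2) by linarith
      have fin2: "\<forall>j\<in>I2. finite (S2 j)" using less.prems(3) unfolding I2_def S2_def by auto
      have hall2: "\<forall>K\<subseteq>I2. card K \<le> card (\<Union>(S2 ` K))"
      proof (intro allI impI)
        fix K assume K: "K \<subseteq> I2"
        have fK: "finite K" using K less.prems(1) unfolding I2_def by (meson finite_Diff finite_subset)
        have KJ: "K \<inter> J = {}" using K unfolding I2_def by auto
        have "K \<union> J \<subseteq> I" using K J(1) unfolding I2_def by auto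
        hence h: "card (K \<union> J) \<le> card (\<Union>(S ` (K \<union> J)))" using less.prems(4) by blast
        have c1: "card (K \<union> J) = card K + card J" using KJ fK fJ by (simp add: card_Un_disjoint)
        have U: "\<Union>(S ` (K \<union> J)) = \<Union>(S2 ` K) \<union> N" unfolding S2_def N_def by auto
        have fS2: "finite (\<Union>(S2 ` K))" using fK fin2 K by auto
        have "card (\<Union>(S2 ` K) \<union> N) = card (\<Union>(S2 ` K)) + card N"
          using fS2 fN by (subst card_Un_disjoint) (auto simp: S2_def)
        then show "card K \<le> card (\<Union>(S2 ` K))" using h c1 eqN unfolding U by linarith
      qed
      obtain h where h: "inj_on h I2" "\<forall>j\<in>I2. h j \<in> S2 j"
        using less.IH[OF cI2 _ refl fin2 hall2] less.prems(1) unfolding I2_def by auto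
      define f where "f = (\<lambda>j. if j \<in> J then g j else h j)"
      have "\<forall>j\<in>I. f j \<in> S j" using g(2) h(2) unfolding f_def I2_def S2_def by auto
      moreover have "inj_on f I"
      proof (rule inj_onI)
        fix a b assume ab: "a \<in> I" "b \<in> I" "f a = f b"
        have gN: "\<forall>j\<in>J. g j \<in> N" using g(2) unfolding N_def by auto
        have hN: "\<forall>j\<in>I2. h j \<notin> N" using h(2) unfolding S2_def by auto
        show "a = b"
        proof (cases "a \<in> J"; cases "b \<in> J")
          assume "a \<in> J" "b \<in> J" thus ?thesis using ab g(1) unfolding f_def inj_on_def by auto
        next
          assume "a \<in> J" "b \<notin> J" thus ?thesis using ab gN hN unfolding f_def I2_def by force
        next
          assume "a \<notin> J" "b \<in> J" thus ?thesis using ab gN hN unfolding f_def I2_def by force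
        next
          assume "a \<notin> J" "b \<notin> J" thus ?thesis using ab h(1) unfolding f_def I2_def inj_on_def by auto
        qed
      qed
      ultimately show ?thesis by blast
    qed
  qed
qed

lemma hall:
  assumes "finite I" "\<forall>i\<in>I. finite (S i)" "\<forall>J\<subseteq>I. card J \<le> card (\<Union>(S ` J))"
  shows "\<exists>f. inj_on f I \<and> (\<forall>i\<in>I. f i \<in> S i)"
  using hall_aux[OF assms(1) refl assms(2,3)] .




lemma finite_pairsK: "finite V \<Longrightarrow> finite (pairsK V)"
proof -
  assume "finite V"
  moreover have "pairsK V \<subseteq> Pow V" unfolding pairsK_def by auto
  ultimately show ?thesis by (meson finite_Pow_iff finite_subset)
qed

lemma pairsK_sum:
  assumes "finite V" "a \<in> V"
  shows "(\<Sum>b\<in>V-{a}. g {a,b}) = (\<Sum>e\<in>{e\<in>pairsK V. a \<in> e}. g e)"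
proof -
  have inj: "inj_on (\<lambda>b. {a,b}) (V-{a})" unfolding inj_on_def by (auto simp: doubleton_eq_iff)
  have img: "(\<lambda>b. {a,b}) ` (V-{a}) = {e\<in>pairsK V. a \<in> e}"
  proof
    show "(\<lambda>b. {a,b}) ` (V-{a}) \<subseteq> {e\<in>pairsK V. a \<in> e}" using assms(2) unfolding pairsK_def by blast
  next
    show "{e\<in>pairsK V. a \<in> e} \<subseteq> (\<lambda>b. {a,b}) ` (V-{a})"
    proof
      fix e assume "e \<in> {e\<in>pairsK V. a \<in> e}"
      then obtain x y where xy: "x \<in> V" "y \<in> V" "x \<noteq> y" "e = {x,y}" "a \<in> e" unfolding pairsK_def by blast
      show "e \<in> (\<lambda>b. {a,b}) ` (V-{a})"
      proof (cases "a = x")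
        case True thus ?thesis using xy by auto
      next
        case False hence "a = y" using xy by auto
        thus ?thesis using xy by (auto simp: insert_commute)
      qed
    qed
  qed
  show ?thesis by (rule sym, rule sum.reindex_cong[OF inj img[symmetric]]) simp
qed

lemma sum_if_card: "finite S \<Longrightarrow> (\<Sum>j\<in>S. if P j then 1 else (0::nat)) = card {j\<in>S. P j}"
  by (simp add: sum.inter_filter[symmetric])

lemma Ncomb_sum:
  assumes "finite P" "\<forall>p\<in>P. g p \<in> M"
  shows "(\<lambda>i. \<Sum>p\<in>P. g p i) \<in> Ncomb M"
proof -
  have "\<forall>i. (\<Sum>p\<in>P. g p i) = (\<Sum>m\<in>g ` P. card {p\<in>P. g p = m} * m i)"
  proof
    fix i
    have "(\<Sum>p\<in>P. g p i) = (\<Sum>m\<in>g ` P. \<Sum>p\<in>{p\<in>P. g p = m}. g p i)"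
      using sum.image_gen[OF assms(1), of "\<lambda>p. g p i" g] .
    also have "\<dots> = (\<Sum>m\<in>g ` P. \<Sum>p\<in>{p\<in>P. g p = m}. m i)"
      by (intro sum.cong) auto
    also have "\<dots> = (\<Sum>m\<in>g ` P. card {p\<in>P. g p = m} * m i)" by simp
    finally show "(\<Sum>p\<in>P. g p i) = (\<Sum>m\<in>g ` P. card {p\<in>P. g p = m} * m i)" .
  qed
  moreover have "finite (g ` P)" "g ` P \<subseteq> M" using assms by auto
  ultimately show ?thesis unfolding Ncomb_def
    by (intro CollectI exI[of _ "g ` P"] exI[of _ "\<lambda>m. card {p\<in>P. g p = m}"]) (simp add: fun_eq_iff)
qed

lemma common_denom:
  "finite S \<Longrightarrow> \<forall>q\<in>S. q \<in> \<rat> \<Longrightarrow> \<exists>k::nat. k \<ge> 1 \<and> (\<forall>q\<in>S. \<exists>n::int. real k * q = of_int n)"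
proof (induction S rule: finite_induct)
  case empty
  then show ?case by (intro exI[of _ 1]) auto
next
  case (insert q S)
  obtain k where k: "k \<ge> 1" "\<forall>p\<in>S. \<exists>n::int. real k * p = of_int n" using insert by auto
  have "q \<in> \<rat>" using insert.prems by simp
  then obtain a b where ab: "q = of_int a / of_int b" "b > 0" by (rule Rats_cases') auto
  define k' where "k' = k * nat b"
  have "k' \<ge> 1" unfolding k'_def using k(1) ab(2) by simp
  moreover have "\<forall>p\<in>insert q S. \<exists>n::int. real k' * p = of_int n"
  proof
    fix p assume "p \<in> insert q S"
    then show "\<exists>n::int. real k' * p = of_int n"
    proof
      assume "p = q"
      have "real k' * p = of_int (int k * a)" unfolding k'_def \<open>p = q\<close> ab(1) using ab(2) by simp
      thus ?thesis by blast
    next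
      assume "p \<in> S"
      then obtain n where "real k * p = of_int n" using k(2) by blast
      hence "real k' * p = of_int (n * b)" unfolding k'_def using ab(2) by (simp add: mult.commute mult.left_commute)
      thus ?thesis by blast
    qed
  qed
  ultimately show ?case by blast
qed

lemma chiEc_Inr: "chiEc V q c (Inr c') = (if c' \<in> eq_parts V \<and> c' = c then 1 else 0)"
  unfolding chiEc_def by simp

lemma chiEc_Inl: "chiEc V q c (Inl e) = (if e \<in> pairsK V \<and> e \<in> q then 1 else 0)"
  unfolding chiEc_def by simp




lemma bip_edge_in_V:
  assumes "c \<in> eq_parts V" "e \<in> bip_edges c"
  shows "\<exists>x y. x \<in> V \<and> y \<in> V \<and> x \<noteq> y \<and> e = {x, y}"
proof -
  obtain a b H' A' where e: "e = {a, b}" "c = {H', A'}" "H' \<inter> A' = {}" "a \<in> H'" "b \<in> A'"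
    using assms(2) unfolding bip_edges_def by blast
  obtain H0 A0 where c: "c = {H0, A0}" "H0 \<union> A0 = V" using assms(1) unfolding eq_parts_def by blast
  have "H' \<subseteq> V" "A' \<subseteq> V" using e(2) c by (auto simp: doubleton_eq_iff)
  moreover have "a \<noteq> b" using e by auto
  ultimately show ?thesis using e by blast
qed

lemma pm_partner:
  assumes "perfect_matching_of V c q" "c \<in> eq_parts V" "a \<in> V"
  shows "\<exists>b0. b0 \<in> V - {a} \<and> (\<forall>b\<in>V-{a}. {a,b} \<in> q \<longleftrightarrow> b = b0)"
proof -
  from assms(1,3) obtain e where e: "e \<in> q" "a \<in> e" and uq: "\<And>e'. e' \<in> q \<Longrightarrow> a \<in> e' \<Longrightarrow> e' = e"
    unfolding perfect_matching_of_def by metis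
  have "e \<in> bip_edges c" using e(1) assms(1) unfolding perfect_matching_of_def by blast
  then obtain x y where xy: "x \<in> V" "y \<in> V" "x \<noteq> y" "e = {x, y}" using bip_edge_in_V assms(2) by blast
  obtain b0 where b0: "b0 \<in> V - {a}" "e = {a, b0}" using xy e(2) by auto
  have "\<forall>b\<in>V-{a}. {a,b} \<in> q \<longleftrightarrow> b = b0"
  proof
    fix b assume b: "b \<in> V - {a}"
    show "{a,b} \<in> q \<longleftrightarrow> b = b0"
    proof
      assume "{a,b} \<in> q" then have "{a,b} = e" using uq by blast
      then show "b = b0" using b b0 by (auto simp: doubleton_eq_iff)
    next
      assume "b = b0" then show "{a,b} \<in> q" using b0 e by simp
    qed
  qed
  then show ?thesis using b0 by blast
qed

lemma pm_deg:
  assumes "perfect_matching_of V c q" "c \<in> eq_parts V" "a \<in> V" "finite V"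
  shows "(\<Sum>b\<in>V-{a}. if {a,b} \<in> q then (1::'n::comm_semiring_1) else 0) = 1"
proof -
  obtain b0 where b0: "b0 \<in> V - {a}" "\<forall>b\<in>V-{a}. {a,b} \<in> q \<longleftrightarrow> b = b0"
    using pm_partner[OF assms(1-3)] by blast
  have "(\<Sum>b\<in>V-{a}. if {a,b} \<in> q then (1::'n) else 0) = (\<Sum>b\<in>V-{a}. if b = b0 then 1 else 0)"
    using b0(2) by (intro sum.cong) auto
  also have "\<dots> = 1" using b0(1) assms(4) by (simp add: sum.delta')
  finally show ?thesis .
qed

lemma pm_from_fun:
  assumes "H \<inter> A = {}" "bij_betw f H A"
  shows "perfect_matching_of (H \<union> A) {H, A} {{a, f a} | a. a \<in> H}"
  unfolding perfect_matching_of_def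
proof
  show "{{a, f a} | a. a \<in> H} \<subseteq> bip_edges {H, A}"
    using assms unfolding bip_edges_def bij_betw_def by blast
next
  show "\<forall>x\<in>H \<union> A. \<exists>!e. e \<in> {{a, f a} |a. a \<in> H} \<and> x \<in> e"
  proof
    fix x assume x: "x \<in> H \<union> A"
    show "\<exists>!e. e \<in> {{a, f a} |a. a \<in> H} \<and> x \<in> e"
    proof (cases "x \<in> H")
      case True
      show ?thesis
      proof (rule ex1I[of _ "{x, f x}"])
        show "{x, f x} \<in> {{a, f a} |a. a \<in> H} \<and> x \<in> {x, f x}" using True by blast
      next
        fix e assume "e \<in> {{a, f a} |a. a \<in> H} \<and> x \<in> e"
        then obtain a where a: "a \<in> H" "e = {a, f a}" "x \<in> e" by blast
        have "f a \<in> A" using a(1) assms(2) unfolding bij_betw_def by blast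
        hence "x = a" using a True assms(1) by auto
        thus "e = {x, f x}" using a by simp
      qed
    next
      case False
      hence xA: "x \<in> A" using x by blast
      then obtain a0 where a0: "a0 \<in> H" "f a0 = x" using assms(2) unfolding bij_betw_def by blast
      show ?thesis
      proof (rule ex1I[of _ "{a0, x}"])
        show "{a0, x} \<in> {{a, f a} |a. a \<in> H} \<and> x \<in> {a0, x}" using a0 by blast
      next
        fix e assume "e \<in> {{a, f a} |a. a \<in> H} \<and> x \<in> e"
        then obtain a where a: "a \<in> H" "e = {a, f a}" "x \<in> e" by blast
        have "x \<noteq> a" using False a(1) by blast
        hence "x = f a" using a by auto
        hence "a = a0" using a0 a(1) assms(2) unfolding bij_betw_def inj_on_def by metis
        thus "e = {a0, x}" using a \<open>x = f a\<close> by simp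
      qed
    qed
  qed
qed

lemma side_sum:
  fixes u :: "'a set \<Rightarrow> nat"
  assumes "finite V" "X \<inter> Y = {}" "X \<union> Y = V" "a \<in> X"
    and "\<forall>b\<in>X. u {a, b} = 0"
  shows "(\<Sum>b\<in>Y. u {a, b}) = (\<Sum>b\<in>V-{a}. u {a, b})"
proof -
  have fin: "finite Y" "finite (X - {a})" using assms(1,3) by auto
  have VV: "V - {a} = Y \<union> (X - {a})" using assms(2,3,4) by blast
  have "(\<Sum>b\<in>Y \<union> (X - {a}). u {a, b}) = (\<Sum>b\<in>Y. u {a, b}) + (\<Sum>b\<in>X-{a}. u {a, b})"
    by (rule sum.union_disjoint) (use fin assms(2) in auto)
  hence "(\<Sum>b\<in>V-{a}. u {a, b}) = (\<Sum>b\<in>Y. u {a, b}) + (\<Sum>b\<in>X-{a}. u {a, b})"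
    unfolding VV .
  also have "(\<Sum>b\<in>X-{a}. u {a, b}) = 0" using assms(5) by simp
  finally show ?thesis by simp
qed

lemma decomp:
  fixes u :: "'a set \<Rightarrow> nat"
  assumes fin: "finite V" and HA: "H \<inter> A = {}" "H \<union> A = V" "card H = card A"
  shows "(\<forall>a\<in>V. (\<Sum>b\<in>V-{a}. u {a,b}) = k) \<Longrightarrow>
    (\<forall>a\<in>V. \<forall>b\<in>V. 0 < u {a,b} \<longrightarrow> (a\<in>H \<and> b\<in>A) \<or> (a\<in>A \<and> b\<in>H)) \<Longrightarrow>
    \<exists>qs. (\<forall>j<k. perfect_matching_of V {H,A} (qs j)) \<and>
      (\<forall>a\<in>V. \<forall>b\<in>V. a\<noteq>b \<longrightarrow> u {a,b} = card {j. j<k \<and> {a,b} \<in> qs j})"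
proof (induction k arbitrary: u)
  case 0
  have "\<forall>a\<in>V. \<forall>b\<in>V. a\<noteq>b \<longrightarrow> u {a,b} = 0"
  proof (intro ballI impI)
    fix a b assume ab: "a \<in> V" "b \<in> V" "a \<noteq> b"
    have "(\<Sum>b\<in>V-{a}. u {a,b}) = 0" using 0(1) ab(1) by blast
    hence "\<forall>b\<in>V-{a}. u {a,b} = 0" using fin by simp
    thus "u {a,b} = 0" using ab by blast
  qed
  then show ?case by (intro exI[of _ "\<lambda>_. {}"]) auto
next
  case (Suc k)
  note deg = Suc.prems(1) and side = Suc.prems(2)
  have finH: "finite H" and finA: "finite A" using fin HA(2) by auto
  have zeroH: "\<forall>a\<in>H. \<forall>b\<in>H. u {a,b} = 0" using side HA by blast
  have zeroA: "\<forall>a\<in>A. \<forall>b\<in>A. u {a,b} = 0" using side HA by blast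
  have rowH: "\<forall>a\<in>H. (\<Sum>b\<in>A. u {a,b}) = Suc k"
  proof
    fix a assume a: "a \<in> H"
    have "(\<Sum>b\<in>A. u {a,b}) = (\<Sum>b\<in>V-{a}. u {a,b})"
      by (rule side_sum[OF fin HA(1,2) a]) (use zeroH a in blast)
    thus "(\<Sum>b\<in>A. u {a,b}) = Suc k" using deg a HA(2) by auto
  qed
  have colA: "\<forall>b\<in>A. (\<Sum>a\<in>H. u {a,b}) = Suc k"
  proof
    fix b assume b: "b \<in> A"
    have HA1: "A \<inter> H = {}" "A \<union> H = V" using HA by auto
    have "(\<Sum>a\<in>H. u {b,a}) = (\<Sum>a\<in>V-{b}. u {b,a})"
      by (rule side_sum[OF fin HA1 b]) (use zeroA b in blast)
    hence "(\<Sum>a\<in>H. u {b,a}) = Suc k" using deg b HA(2) by auto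
    thus "(\<Sum>a\<in>H. u {a,b}) = Suc k" by (simp add: insert_commute)
  qed
  define S where "S = (\<lambda>a. {b\<in>A. 0 < u {a,b}})"
  have hallc: "\<forall>X\<subseteq>H. card X \<le> card (\<Union>(S ` X))"
  proof (intro allI impI)
    fix X assume X: "X \<subseteq> H"
    define N where "N = \<Union>(S ` X)"
    have NA: "N \<subseteq> A" unfolding N_def S_def by blast
    have finX: "finite X" using X finH finite_subset by blast
    have finN: "finite N" using NA finA finite_subset by blast
    have "(\<Sum>a\<in>X. \<Sum>b\<in>A. u {a,b}) = (\<Sum>a\<in>X. Suc k)"
      by (rule sum.cong) (use rowH X in auto)
    hence "Suc k * card X = (\<Sum>a\<in>X. \<Sum>b\<in>A. u {a,b})" by simp
    also have "\<dots> = (\<Sum>a\<in>X. \<Sum>b\<in>N. u {a,b})"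
    proof (rule sum.cong[OF refl])
      fix a assume a: "a \<in> X"
      show "(\<Sum>b\<in>A. u {a,b}) = (\<Sum>b\<in>N. u {a,b})"
        by (rule sum.mono_neutral_right[OF finA NA]) (use a in \<open>auto simp: N_def S_def\<close>)
    qed
    also have "\<dots> = (\<Sum>b\<in>N. \<Sum>a\<in>X. u {a,b})" by (rule sum.swap)
    also have "\<dots> \<le> (\<Sum>b\<in>N. \<Sum>a\<in>H. u {a,b})"
      by (rule sum_mono, rule sum_mono2[OF finH X]) auto
    also have "\<dots> = Suc k * card N" using colA NA by (simp add: subset_iff)
    finally have "Suc k * card X \<le> Suc k * card N" .
    hence "card X \<le> card N" by (metis mult_le_cancel1 zero_less_Suc)
    thus "card X \<le> card (\<Union>(S ` X))" unfolding N_def .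
  qed
  obtain f where f: "inj_on f H" "\<forall>a\<in>H. f a \<in> S a"
    using hall[OF finH _ hallc] finA unfolding S_def by auto
  have fHA: "f ` H \<subseteq> A" using f(2) unfolding S_def by blast
  have "card (f ` H) = card A" using f(1) HA(3) by (simp add: card_image)
  hence "f ` H = A" using card_subset_eq[OF finA fHA] by simp
  hence bij: "bij_betw f H A" using f(1) unfolding bij_betw_def by simp
  define q where "q = {{a, f a} | a. a \<in> H}"
  have pm: "perfect_matching_of V {H,A} q" using pm_from_fun[OF HA(1) bij] HA(2) unfolding q_def by simp
  have eqp: "{H,A} \<in> eq_parts V"
  proof -
    have "card V = card H + card A" using HA finH finA by (metis card_Un_disjoint)
    hence "card H = card V div 2" "card A = card V div 2" using HA(3) by auto
    thus ?thesis unfolding eq_parts_def using HA(1,2) by blast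
  qed
  have qpos: "\<forall>e\<in>q. 0 < u e" using f(2) unfolding q_def S_def by blast
  define u' where "u' = (\<lambda>e. u e - (if e \<in> q then 1 else 0))"
  have ind_le: "\<And>e. (if e \<in> q then 1 else 0) \<le> u e" using qpos by (auto simp: Suc_le_eq)
  have deg': "\<forall>a\<in>V. (\<Sum>b\<in>V-{a}. u' {a,b}) = k"
  proof
    fix a assume a: "a \<in> V"
    have "(\<Sum>b\<in>V-{a}. u' {a,b}) = (\<Sum>b\<in>V-{a}. u {a,b}) - (\<Sum>b\<in>V-{a}. if {a,b} \<in> q then 1 else 0)"
      unfolding u'_def by (rule sum_subtractf_nat) (use ind_le in auto)
    also have "(\<Sum>b\<in>V-{a}. if {a,b} \<in> q then 1 else 0) = (1::nat)"
      by (rule pm_deg[OF pm eqp a fin])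
    finally show "(\<Sum>b\<in>V-{a}. u' {a,b}) = k" using deg a by simp
  qed
  have side': "\<forall>a\<in>V. \<forall>b\<in>V. 0 < u' {a,b} \<longrightarrow> (a\<in>H \<and> b\<in>A) \<or> (a\<in>A \<and> b\<in>H)"
    using side unfolding u'_def by auto
  obtain qs' where qs': "\<forall>j<k. perfect_matching_of V {H,A} (qs' j)"
    "\<forall>a\<in>V. \<forall>b\<in>V. a\<noteq>b \<longrightarrow> u' {a,b} = card {j. j<k \<and> {a,b} \<in> qs' j}"
    using Suc.IH[OF deg' side'] by blast
  define qs where "qs = qs'(k := q)"
  have "\<forall>j<Suc k. perfect_matching_of V {H,A} (qs j)"
    using qs'(1) pm unfolding qs_def by (auto simp: less_Suc_eq)
  moreover have "\<forall>a\<in>V. \<forall>b\<in>V. a\<noteq>b \<longrightarrow> u {a,b} = card {j. j<Suc k \<and> {a,b} \<in> qs j}"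
  proof (intro ballI impI)
    fix a b assume ab: "a \<in> V" "b \<in> V" "a \<noteq> b"
    have fin_k: "finite {j. j<k \<and> {a,b} \<in> qs' j}" by simp
    have u_eq: "u {a,b} = u' {a,b} + (if {a,b} \<in> q then 1 else 0)"
      using ind_le[of "{a,b}"] unfolding u'_def by simp
    show "u {a,b} = card {j. j<Suc k \<and> {a,b} \<in> qs j}"
    proof (cases "{a,b} \<in> q")
      case True
      have "{j. j<Suc k \<and> {a,b} \<in> qs j} = insert k {j. j<k \<and> {a,b} \<in> qs' j}"
        using True unfolding qs_def by (auto simp: less_Suc_eq)
      thus ?thesis using u_eq True qs'(2) ab fin_k by simp
    next
      case False
      have "{j. j<Suc k \<and> {a,b} \<in> qs j} = {j. j<k \<and> {a,b} \<in> qs' j}"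
        using False unfolding qs_def by (auto simp: less_Suc_eq)
      thus ?thesis using u_eq False qs'(2) ab by simp
    qed
  qed
  ultimately show ?case by blast
qed




lemma lin_elim:
  fixes a b z :: "'i \<Rightarrow> real"
  shows "(\<Sum>i\<in>I. (a i - c * b i) * z i) = (\<Sum>i\<in>I. a i * z i) - c * (\<Sum>i\<in>I. b i * z i)"
  by (simp add: sum_subtractf sum_distrib_left algebra_simps)

lemma rat_approx:
  fixes I :: "'i set"
  assumes "finite I"
  shows "finite (J :: (('i \<Rightarrow> real) \<times> real) set) \<Longrightarrow> \<forall>j\<in>J. (\<forall>i. fst j i \<in> \<rat>) \<and> snd j \<in> \<rat> \<Longrightarrow>
    \<forall>j\<in>J. (\<Sum>i\<in>I. fst j i * x i) = snd j \<Longrightarrow> (\<epsilon>::real) > 0 \<Longrightarrow>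
    \<exists>y. (\<forall>i. y i \<in> \<rat>) \<and> (\<forall>i\<in>I. \<bar>y i - x i\<bar> < \<epsilon>) \<and> (\<forall>j\<in>J. (\<Sum>i\<in>I. fst j i * y i) = snd j)"
  using assms
proof (induction I arbitrary: J x \<epsilon> rule: finite_induct)
  case empty
  then show ?case by (intro exI[of _ "\<lambda>_. 0"]) auto
next
  case (insert i0 I)
  note finJ = insert.prems(1) and ratJ = insert.prems(2) and eqJ = insert.prems(3) and eps = insert.prems(4)
  have sum_ins: "\<And>j z. (\<Sum>i\<in>insert i0 I. fst j i * z i) = fst j i0 * z i0 + (\<Sum>i\<in>I. fst j i * z i)"
    using insert.hyps by simp
  show ?case
  proof (cases "\<forall>j\<in>J. fst j i0 = 0")
    case True
    have "\<forall>j\<in>J. (\<Sum>i\<in>I. fst j i * x i) = snd j" using eqJ True insert.hyps by simp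
    then obtain y where y: "\<forall>i. y i \<in> \<rat>" "\<forall>i\<in>I. \<bar>y i - x i\<bar> < \<epsilon>" "\<forall>j\<in>J. (\<Sum>i\<in>I. fst j i * y i) = snd j"
      using insert.IH[OF finJ ratJ _ eps] by blast
    obtain r where r: "r \<in> \<rat>" "x i0 - \<epsilon> < r" "r < x i0 + \<epsilon>"
      using Rats_dense_in_real[of "x i0 - \<epsilon>" "x i0 + \<epsilon>"] eps by auto
    define y' where "y' = y(i0 := r)"
    have "\<forall>i. y' i \<in> \<rat>" using y(1) r(1) unfolding y'_def by simp
    moreover have "\<forall>i\<in>insert i0 I. \<bar>y' i - x i\<bar> < \<epsilon>"
      using y(2) r insert.hyps(2) unfolding y'_def by auto
    moreover have "\<forall>j\<in>J. (\<Sum>i\<in>insert i0 I. fst j i * y' i) = snd j"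
    proof
      fix j assume j: "j \<in> J"
      have "(\<Sum>i\<in>I. fst j i * y' i) = (\<Sum>i\<in>I. fst j i * y i)"
        using insert.hyps(2) unfolding y'_def by (intro sum.cong) auto
      thus "(\<Sum>i\<in>insert i0 I. fst j i * y' i) = snd j" unfolding sum_ins using y(3) j True by simp
    qed
    ultimately show ?thesis by blast
  next
    case False
    then obtain j0 where j0: "j0 \<in> J" "fst j0 i0 \<noteq> 0" by blast
    define \<alpha> where "\<alpha> = fst j0 i0"
    define T where "T = (\<lambda>j::('i \<Rightarrow> real) \<times> real.
       ((\<lambda>i. fst j i - fst j i0 / \<alpha> * fst j0 i), snd j - fst j i0 / \<alpha> * snd j0))"
    define J' where "J' = T ` J"
    have a0: "\<alpha> \<noteq> 0" using j0 unfolding \<alpha>_def by simp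
    have ratj0: "\<forall>i. fst j0 i \<in> \<rat>" "snd j0 \<in> \<rat>" using ratJ j0 by auto
    have ra: "\<alpha> \<in> \<rat>" using ratj0 unfolding \<alpha>_def by simp
    have finJ': "finite J'" unfolding J'_def using finJ by simp
    have ratJ': "\<forall>j\<in>J'. (\<forall>i. fst j i \<in> \<rat>) \<and> snd j \<in> \<rat>"
    proof
      fix j' assume "j' \<in> J'"
      then obtain j where j: "j \<in> J" "j' = T j" unfolding J'_def by blast
      have "\<forall>i. fst j i \<in> \<rat>" "snd j \<in> \<rat>" using ratJ j(1) by auto
      thus "(\<forall>i. fst j' i \<in> \<rat>) \<and> snd j' \<in> \<rat>" using j(2) ratj0 ra unfolding T_def
        by (auto intro!: Rats_diff Rats_mult Rats_divide)
    qed
    have lin: "\<And>j z. (\<Sum>i\<in>I. fst (T j) i * z i) = (\<Sum>i\<in>I. fst j i * z i) - fst j i0 / \<alpha> * (\<Sum>i\<in>I. fst j0 i * z i)"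
      unfolding T_def fst_conv by (rule lin_elim)
    have eqJ': "\<forall>j\<in>J'. (\<Sum>i\<in>I. fst j i * x i) = snd j"
    proof
      fix j' assume "j' \<in> J'"
      then obtain j where j: "j \<in> J" "j' = T j" unfolding J'_def by blast
      have e1: "(\<Sum>i\<in>I. fst j i * x i) = snd j - fst j i0 * x i0" using eqJ j(1) insert.hyps by (simp add: algebra_simps)
      have e2: "(\<Sum>i\<in>I. fst j0 i * x i) = snd j0 - \<alpha> * x i0" using eqJ j0(1) insert.hyps unfolding \<alpha>_def by (simp add: algebra_simps)
      show "(\<Sum>i\<in>I. fst j' i * x i) = snd j'"
        unfolding j(2) lin e1 e2 using a0 by (simp add: T_def field_simps)
    qed
    define M where "M = (\<Sum>i\<in>I. \<bar>fst j0 i\<bar>)"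
    have M0: "M \<ge> 0" unfolding M_def by (simp add: sum_nonneg)
    have aa: "\<bar>\<alpha>\<bar> > 0" using a0 by simp
    define \<delta> where "\<delta> = \<epsilon> * \<bar>\<alpha>\<bar> / (\<bar>\<alpha>\<bar> + M)"
    have d0: "\<delta> > 0" unfolding \<delta>_def using eps aa M0 by simp
    obtain y where y: "\<forall>i. y i \<in> \<rat>" "\<forall>i\<in>I. \<bar>y i - x i\<bar> < \<delta>" "\<forall>j\<in>J'. (\<Sum>i\<in>I. fst j i * y i) = snd j"
      using insert.IH[OF finJ' ratJ' eqJ' d0] by blast
    define r where "r = (snd j0 - (\<Sum>i\<in>I. fst j0 i * y i)) / \<alpha>"
    have rr: "r \<in> \<rat>" unfolding r_def using ratj0 y(1) ra
      by (intro Rats_divide Rats_diff Rats_sum Rats_mult) auto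
    define y' where "y' = y(i0 := r)"
    have yI: "\<And>j. (\<Sum>i\<in>I. fst j i * y' i) = (\<Sum>i\<in>I. fst j i * y i)"
      using insert.hyps(2) unfolding y'_def by (intro sum.cong) auto
    have "\<forall>i. y' i \<in> \<rat>" using y(1) rr unfolding y'_def by simp
    moreover have "\<forall>i\<in>insert i0 I. \<bar>y' i - x i\<bar> < \<epsilon>"
    proof
      fix i assume i: "i \<in> insert i0 I"
      show "\<bar>y' i - x i\<bar> < \<epsilon>"
      proof (cases "i = i0")
        case False
        hence "i \<in> I" using i by simp
        moreover have "\<delta> \<le> \<epsilon>" unfolding \<delta>_def using eps aa M0 by (simp add: field_simps)
        ultimately show ?thesis using y(2) False unfolding y'_def by fastforce
      next
        case True
        have e2: "(\<Sum>i\<in>I. fst j0 i * x i) = snd j0 - \<alpha> * x i0" using eqJ j0(1) insert.hyps unfolding \<alpha>_def by (simp add: algebra_simps)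
        have "r - x i0 = - (\<Sum>i\<in>I. fst j0 i * (y i - x i)) / \<alpha>"
          unfolding r_def using a0 e2 by (simp add: field_simps sum_subtractf right_diff_distrib)
        hence "\<bar>r - x i0\<bar> = \<bar>\<Sum>i\<in>I. fst j0 i * (y i - x i)\<bar> / \<bar>\<alpha>\<bar>" by (simp add: abs_minus_commute)
        also have "\<bar>\<Sum>i\<in>I. fst j0 i * (y i - x i)\<bar> \<le> (\<Sum>i\<in>I. \<bar>fst j0 i\<bar> * \<delta>)"
        proof -
          have "\<bar>\<Sum>i\<in>I. fst j0 i * (y i - x i)\<bar> \<le> (\<Sum>i\<in>I. \<bar>fst j0 i * (y i - x i)\<bar>)" by (rule sum_abs)
          also have "\<dots> \<le> (\<Sum>i\<in>I. \<bar>fst j0 i\<bar> * \<delta>)"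
            using y(2) by (intro sum_mono) (auto simp: abs_mult intro!: mult_left_mono)
          finally show ?thesis .
        qed
        hence "\<bar>\<Sum>i\<in>I. fst j0 i * (y i - x i)\<bar> / \<bar>\<alpha>\<bar> \<le> M * \<delta> / \<bar>\<alpha>\<bar>"
          unfolding M_def using aa by (simp add: sum_distrib_right divide_right_mono)
        also have "M * \<delta> / \<bar>\<alpha>\<bar> = \<epsilon> * M / (\<bar>\<alpha>\<bar> + M)"
        proof -
          have gen: "M * (\<epsilon> * b / (b + M)) / b = \<epsilon> * M / (b + M)" if "b > 0" for b :: real
          proof -
            have b0: "b \<noteq> 0" using that by auto
            have "M * (\<epsilon> * b / (b + M)) / b = (M * (\<epsilon> / (b + M))) * b / b" by simp
            also have "\<dots> = M * (\<epsilon> / (b + M))" using b0 by simp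
            also have "\<dots> = \<epsilon> * M / (b + M)" by simp
            finally show ?thesis .
          qed
          show ?thesis unfolding \<delta>_def using gen[OF aa] .
        qed
        also have "\<dots> < \<epsilon>" using aa M0 eps by (simp add: field_simps)
        finally show ?thesis using True unfolding y'_def by simp
      qed
    qed
    moreover have "\<forall>j\<in>J. (\<Sum>i\<in>insert i0 I. fst j i * y' i) = snd j"
    proof
      fix j assume j: "j \<in> J"
      have "T j \<in> J'" unfolding J'_def using j by simp
      hence e: "(\<Sum>i\<in>I. fst (T j) i * y i) = snd (T j)" using y(3) by blast
      have "(\<Sum>i\<in>I. fst j i * y i) = snd j - fst j i0 / \<alpha> * snd j0 + fst j i0 / \<alpha> * (\<Sum>i\<in>I. fst j0 i * y i)"
        using e unfolding lin by (simp add: T_def)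
      moreover have "fst j i0 * y' i0 = fst j i0 / \<alpha> * snd j0 - fst j i0 / \<alpha> * (\<Sum>i\<in>I. fst j0 i * y i)"
        unfolding y'_def r_def using a0 by (simp add: field_simps)
      ultimately show "(\<Sum>i\<in>insert i0 I. fst j i * y' i) = snd j"
        unfolding sum_ins yI by linarith
    qed
    ultimately show ?thesis by blast
  qed
qed




lemma PM_elem:
  assumes "m \<in> PM V"
  obtains q c where "m = chiEc V q c" "c \<in> eq_parts V" "perfect_matching_of V c q"
  using assms unfolding PM_def by blast

lemma eq_parts_HA:
  assumes "{H', A'} \<in> eq_parts V" "H' \<inter> A' = {}" "H' \<union> A' = V"
  shows "card H' = card A'"
proof -
  obtain H0 A0 where "{H', A'} = {H0, A0}" "card H0 = card V div 2" "card A0 = card V div 2"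
    using assms(1) unfolding eq_parts_def by blast
  thus ?thesis by (auto simp: doubleton_eq_iff)
qed

lemma bip_edgesE:
  assumes "e \<in> bip_edges c"
  obtains a' b' H' A' where "e = {a',b'}" "c = {H',A'}" "H'\<inter>A'={}" "a'\<in>H'" "b'\<in>A'"
  using assms unfolding bip_edges_def by blast

lemma dir2:
  fixes V :: "'a set" and E :: "'a set set" and r :: nat
    and H A :: "nat \<Rightarrow> 'a set"
  assumes finV: "finite V"
    and reg: "regular_graph V E r"
    and hap: "HAP_table V r H A"
    and vN: "v \<in> Nbar V (PM V)"
    and vK: "\<forall>e \<in> pairsK V. v (Inl e) = (if e \<in> E then 1 else 0)"
    and vC: "\<forall>c \<in> eq_parts V. v (Inr c) = card {d \<in> {1..r}. {H d, A d} = c}"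
  shows "P_GHA V E r H A \<noteq> {}"
proof -
  obtain k S f where k: "k \<ge> 1" and S: "finite S" "S \<subseteq> PM V"
    and kv: "\<And>i. k * v i = (\<Sum>m\<in>S. f m * m i)"
    using vN unfolding Nbar_def Ncomb_def by (auto simp: fun_eq_iff)
  define D where "D = {1..r}"
  define cc where "cc = (\<lambda>d. {H d, A d})"
  define n where "n = (\<lambda>d. card {d'\<in>D. cc d' = cc d})"
  have ccE: "\<forall>d\<in>D. cc d \<in> eq_parts V" using hap unfolding HAP_table_def cc_def D_def by blast
  have n1: "\<forall>d\<in>D. n d \<ge> 1"
  proof
    fix d assume "d \<in> D"
    hence "d \<in> {d'\<in>D. cc d' = cc d}" by simp
    moreover have "finite {d'\<in>D. cc d' = cc d}" unfolding D_def by simp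
    ultimately show "n d \<ge> 1" unfolding n_def by (metis One_nat_def Suc_leI card_gt_0_iff empty_iff)
  qed
  have vcc: "\<forall>d\<in>D. v (Inr (cc d)) = n d" using vC ccE unfolding n_def D_def cc_def by auto
  define N where "N = (\<lambda>e d. \<Sum>m\<in>S. f m * m (Inr (cc d)) * m (Inl e))"
  define x where "x = (\<lambda>e d. real (N e d) / (real k * real (n d)))"
  have cls: "\<forall>m\<in>S. \<exists>q c. m = chiEc V q c \<and> c \<in> eq_parts V \<and> perfect_matching_of V c q"
    using S(2) unfolding PM_def by blast
  have sumN_e: "\<forall>e\<in>E. (\<Sum>d\<in>D. x e d) = 1"
  proof
    fix e assume eE: "e \<in> E"
    have eK: "e \<in> pairsK V" using eE reg unfolding regular_graph_def by blast
    have per_m: "(\<Sum>d\<in>D. real (f m * m (Inr (cc d)) * m (Inl e)) / (real k * real (n d)))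
                 = real (f m * m (Inl e)) / real k" if mS: "m \<in> S" for m
    proof -
      obtain q c where qc: "m = chiEc V q c" "c \<in> eq_parts V" "perfect_matching_of V c q" using cls mS by blast
      have mcc: "\<And>d. d \<in> D \<Longrightarrow> m (Inr (cc d)) = (if cc d = c then 1 else 0)"
        using qc(1) ccE by (simp add: chiEc_Inr)
      show ?thesis
      proof (cases "\<exists>d0\<in>D. cc d0 = c")
        case True
        then obtain d0 where d0: "d0 \<in> D" "cc d0 = c" by blast
        define D0 where "D0 = {d\<in>D. cc d = c}"
        have nD0: "\<forall>d\<in>D0. n d = card D0" unfolding n_def D0_def by auto
        have cD0: "card D0 \<ge> 1" using n1 d0 nD0 unfolding D0_def by auto
        have "(\<Sum>d\<in>D. real (f m * m (Inr (cc d)) * m (Inl e)) / (real k * real (n d)))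
            = (\<Sum>d\<in>D. if cc d = c then real (f m * m (Inl e)) / (real k * real (card D0)) else 0)"
          using mcc nD0 unfolding D0_def by (intro sum.cong) auto
        also have "\<dots> = (\<Sum>d\<in>D0. real (f m * m (Inl e)) / (real k * real (card D0)))"
          unfolding D0_def by (rule sum.inter_filter[symmetric]) (simp add: D_def)
        also have "\<dots> = real (card D0) * (real (f m * m (Inl e)) / (real k * real (card D0)))" by simp
        also have "\<dots> = real (f m * m (Inl e)) / real k" using cD0 by simp
        finally show ?thesis .
      next
        case False
        have "v (Inr c) = 0" using vC qc(2) False unfolding cc_def D_def by auto
        hence "(\<Sum>m'\<in>S. f m' * m' (Inr c)) = 0" using kv[of "Inr c"] by simp
        hence "f m * m (Inr c) = 0" using S(1) mS by simp
        moreover have "m (Inr c) = 1" using qc(1,2) by (simp add: chiEc_Inr)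
        ultimately have "f m = 0" by simp
        thus ?thesis by simp
      qed
    qed
    have "(\<Sum>d\<in>D. x e d) = (\<Sum>d\<in>D. \<Sum>m\<in>S. real (f m * m (Inr (cc d)) * m (Inl e)) / (real k * real (n d)))"
      unfolding x_def N_def by (simp add: sum_divide_distrib)
    also have "\<dots> = (\<Sum>m\<in>S. \<Sum>d\<in>D. real (f m * m (Inr (cc d)) * m (Inl e)) / (real k * real (n d)))"
      by (rule sum.swap)
    also have "\<dots> = (\<Sum>m\<in>S. real (f m * m (Inl e)) / real k)" using per_m by simp
    also have "\<dots> = real (\<Sum>m\<in>S. f m * m (Inl e)) / real k" by (simp add: sum_divide_distrib)
    also have "\<dots> = real (k * v (Inl e)) / real k" using kv by simp
    also have "\<dots> = 1" using vK eK eE k by simp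
    finally show "(\<Sum>d\<in>D. x e d) = 1" .
  qed
  have zeroK: "\<forall>e\<in>pairsK V - E. \<forall>d. x e d = 0"
  proof (intro ballI allI)
    fix e d assume e: "e \<in> pairsK V - E"
    have "(\<Sum>m\<in>S. f m * m (Inl e)) = 0" using kv[of "Inl e"] vK e by simp
    hence "\<forall>m\<in>S. f m * m (Inl e) = 0" using S(1) by simp
    hence "N e d = 0" unfolding N_def by (intro sum.neutral) auto
    thus "x e d = 0" unfolding x_def by simp
  qed
  have vert: "\<forall>d\<in>D. \<forall>a\<in>V. (\<Sum>b\<in>V - {a}. x {a, b} d) = 1"
  proof (intro ballI)
    fix d a assume d: "d \<in> D" and a: "a \<in> V"
    have one: "(\<Sum>b\<in>V-{a}. m (Inl {a,b})) = 1" if mS: "m \<in> S" for m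
    proof -
      obtain q c where qc: "m = chiEc V q c" "c \<in> eq_parts V" "perfect_matching_of V c q" using cls mS by blast
      have "(\<Sum>b\<in>V-{a}. m (Inl {a,b})) = (\<Sum>b\<in>V-{a}. if {a,b} \<in> q then 1 else 0)"
        using qc(1) a by (intro sum.cong) (auto simp: pairsK_def chiEc_Inl)
      also have "\<dots> = 1" by (rule pm_deg[OF qc(3,2) a finV])
      finally show ?thesis .
    qed
    have "(\<Sum>b\<in>V-{a}. N {a,b} d) = (\<Sum>m\<in>S. \<Sum>b\<in>V-{a}. f m * m (Inr (cc d)) * m (Inl {a,b}))"
      unfolding N_def by (rule sum.swap)
    also have "\<dots> = (\<Sum>m\<in>S. f m * m (Inr (cc d)) * (\<Sum>b\<in>V-{a}. m (Inl {a,b})))"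
      by (simp add: sum_distrib_left)
    also have "\<dots> = (\<Sum>m\<in>S. f m * m (Inr (cc d)))" using one by simp
    also have "\<dots> = k * n d" using kv[of "Inr (cc d)"] vcc d by simp
    finally have sN: "(\<Sum>b\<in>V-{a}. N {a,b} d) = k * n d" .
    have "(\<Sum>b\<in>V-{a}. x {a,b} d) = real (\<Sum>b\<in>V-{a}. N {a,b} d) / (real k * real (n d))"
      unfolding x_def by (simp add: sum_divide_distrib)
    also have "\<dots> = 1" unfolding sN using n1 d k by (simp add: Suc_le_eq)
    finally show "(\<Sum>b\<in>V - {a}. x {a, b} d) = 1" .
  qed
  have nonneg: "\<forall>e d. 0 \<le> x e d" unfolding x_def by simp
  have le1: "\<forall>e\<in>E. \<forall>d\<in>D. x e d \<le> 1"
  proof (intro ballI)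
    fix e d assume "e \<in> E" "d \<in> D"
    hence "x e d \<le> (\<Sum>d\<in>D. x e d)" using nonneg unfolding D_def by (intro member_le_sum) auto
    thus "x e d \<le> 1" using sumN_e \<open>e \<in> E\<close> by simp
  qed
  have side: "\<forall>a b d. {a, b} \<in> E \<and> d \<in> D \<and>
        ((a \<in> H d \<and> b \<in> H d) \<or> (a \<in> A d \<and> b \<in> A d)) \<longrightarrow> x {a, b} d = 0"
  proof (intro allI impI)
    fix a b d assume h: "{a, b} \<in> E \<and> d \<in> D \<and> ((a \<in> H d \<and> b \<in> H d) \<or> (a \<in> A d \<and> b \<in> A d))"
    have HAd: "H d \<inter> A d = {}" using hap h unfolding HAP_table_def D_def by blast
    have "\<forall>m\<in>S. m (Inr (cc d)) * m (Inl {a,b}) = 0"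
    proof
      fix m assume mS: "m \<in> S"
      obtain q c where qc: "m = chiEc V q c" "c \<in> eq_parts V" "perfect_matching_of V c q" using cls mS by blast
      show "m (Inr (cc d)) * m (Inl {a,b}) = 0"
      proof (rule ccontr)
        assume "m (Inr (cc d)) * m (Inl {a,b}) \<noteq> 0"
        note nz = this
        have m1: "m (Inr (cc d)) = (if cc d \<in> eq_parts V \<and> cc d = c then 1 else 0)" using qc(1) by (simp add: chiEc_Inr)
        have m2: "m (Inl {a,b}) = (if {a,b} \<in> pairsK V \<and> {a,b} \<in> q then 1 else 0)" using qc(1) by (simp add: chiEc_Inl)
        have cq: "cc d = c" "{a,b} \<in> q"
        proof -
          show "cc d = c" proof (rule ccontr) assume "cc d \<noteq> c" thus False using nz m1 by simp qed
          show "{a,b} \<in> q" proof (rule ccontr) assume "{a,b} \<notin> q" thus False using nz m2 by simp qed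
        qed
        have "q \<subseteq> bip_edges c" using qc(3) unfolding perfect_matching_of_def by (rule conjunct1)
        hence "{a,b} \<in> bip_edges c" using cq(2) by (rule subsetD)
        hence "{a,b} \<in> bip_edges (cc d)" using cq(1) by simp
        then obtain a' b' H' A' where e: "{a,b} = {a', b'}" "cc d = {H', A'}" "H' \<inter> A' = {}" "a' \<in> H'" "b' \<in> A'"
          by (rule bip_edgesE)
        have "(H' = H d \<and> A' = A d) \<or> (H' = A d \<and> A' = H d)" using e(2) unfolding cc_def by (auto simp: doubleton_eq_iff)
        moreover have ab': "a' \<in> {a,b}" "b' \<in> {a,b}" using e(1) by auto
        moreover have "(a' \<in> H d \<and> b' \<in> H d) \<or> (a' \<in> A d \<and> b' \<in> A d)" using ab' h by blast
        ultimately show False using e(4,5) HAd by blast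
      qed
    qed
    hence "N {a,b} d = 0" unfolding N_def by (intro sum.neutral) (auto simp: mult.assoc)
    thus "x {a, b} d = 0" unfolding x_def by simp
  qed
  have "x \<in> P_GHA V E r H A"
    unfolding P_GHA_def D_def[symmetric]
    apply (intro CollectI conjI)
    subgoal using sumN_e by blast
    subgoal using zeroK by blast
    subgoal using vert by blast
    subgoal using nonneg le1 by blast
    subgoal using side by blast
    done
  thus ?thesis by blast
qed




lemma sum_ind: "finite I \<Longrightarrow> (\<Sum>i\<in>I. (if P i then 1 else 0) * G i) = (\<Sum>i\<in>{i\<in>I. P i}. (G i :: real))"
proof -
  assume True: "finite I"
  have "(\<Sum>i\<in>I. (if P i then 1 else 0) * G i) = (\<Sum>i\<in>I. if P i then G i else 0)"
    by (intro sum.cong) auto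
  also have "\<dots> = (\<Sum>i\<in>{i\<in>I. P i}. G i)" using True by (simp add: sum.inter_filter)
  finally show ?thesis .
qed

lemma sumI1:
  fixes r :: nat
  assumes "finite V" "e \<in> pairsK V"
  shows "(\<Sum>i\<in>pairsK V \<times> {1..r}. (if fst i = e then 1 else 0) * g (fst i) (snd i)) = (\<Sum>d\<in>{1..r}. (g e d :: real))"
proof -
  have eq: "{i\<in>pairsK V \<times> {1..r}. fst i = e} = (\<lambda>d. (e,d)) ` {1..r}" using assms(2) by auto
  have inj: "inj_on (\<lambda>d. (e,d)) {1..r}" unfolding inj_on_def by auto
  have "(\<Sum>i\<in>pairsK V \<times> {1..r}. (if fst i = e then 1 else 0) * g (fst i) (snd i))
      = (\<Sum>i\<in>{i\<in>pairsK V \<times> {1..r}. fst i = e}. g (fst i) (snd i))"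
    by (rule sum_ind) (simp add: finite_pairsK[OF assms(1)] finite_cartesian_product)
  also have "\<dots> = (\<Sum>i\<in>(\<lambda>d. (e,d)) ` {1..r}. g (fst i) (snd i))" unfolding eq ..
  also have "\<dots> = (\<Sum>d\<in>{1..r}. g e d)" by (subst sum.reindex[OF inj]) simp
  finally show ?thesis .
qed

lemma sumI2:
  fixes r :: nat
  assumes "finite V" "a \<in> V" "d \<in> {1..r}"
  shows "(\<Sum>i\<in>pairsK V \<times> {1..r}. (if snd i = d \<and> a \<in> fst i then 1 else 0) * g (fst i) (snd i))
    = (\<Sum>b\<in>V-{a}. (g {a,b} d :: real))"
proof -
  have eq: "{i\<in>pairsK V \<times> {1..r}. snd i = d \<and> a \<in> fst i} = (\<lambda>e. (e,d)) ` {e\<in>pairsK V. a \<in> e}" using assms(3) by auto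
  have inj: "inj_on (\<lambda>e. (e,d)) {e\<in>pairsK V. a \<in> e}" unfolding inj_on_def by auto
  have "(\<Sum>i\<in>pairsK V \<times> {1..r}. (if snd i = d \<and> a \<in> fst i then 1 else 0) * g (fst i) (snd i))
      = (\<Sum>i\<in>{i\<in>pairsK V \<times> {1..r}. snd i = d \<and> a \<in> fst i}. g (fst i) (snd i))"
    by (rule sum_ind) (simp add: finite_pairsK[OF assms(1)] finite_cartesian_product)
  also have "\<dots> = (\<Sum>i\<in>(\<lambda>e. (e,d)) ` {e\<in>pairsK V. a \<in> e}. g (fst i) (snd i))" unfolding eq ..
  also have "\<dots> = (\<Sum>e\<in>{e\<in>pairsK V. a \<in> e}. g e d)" by (subst sum.reindex[OF inj]) simp
  also have "\<dots> = (\<Sum>b\<in>V-{a}. g {a,b} d)" using pairsK_sum[OF assms(1,2), of "\<lambda>e. g e d"] by simp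
  finally show ?thesis .
qed

lemma sumI3:
  assumes "finite I" "i0 \<in> I"
  shows "(\<Sum>i\<in>I. (if i = i0 then 1 else 0) * G i) = (G i0 :: real)"
proof -
  have "{i\<in>I. i = i0} = {i0}" using assms by auto
  thus ?thesis using assms by (simp add: sum_ind)
qed

lemma rat_point:
  fixes V :: "'a set" and E :: "'a set set" and r :: nat
    and H A :: "nat \<Rightarrow> 'a set"
  assumes finV: "finite V" and reg: "regular_graph V E r"
    and xP: "x \<in> P_GHA V E r H A"
  shows "\<exists>y. y \<in> P_GHA V E r H A \<and> (\<forall>e d. y e d \<in> \<rat>) \<and> (\<forall>e d. 0 \<le> y e d)
      \<and> (\<forall>e d. (e,d) \<notin> pairsK V \<times> {1..r} \<longrightarrow> y e d = 0)"
proof -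
  define I where "I = pairsK V \<times> {1..r}"
  have finI: "finite I" unfolding I_def using finite_pairsK[OF finV] by simp
  have EK: "E \<subseteq> pairsK V" using reg unfolding regular_graph_def by blast
  have finE: "finite E" using EK finite_pairsK[OF finV] finite_subset by blast
  note P = xP[unfolded P_GHA_def mem_Collect_eq]
  define X where "X = (\<lambda>i. x (fst i) (snd i))"
  have Xnn: "\<forall>i\<in>I. 0 \<le> X i"
  proof
    fix i assume "i \<in> I"
    then obtain e d where i: "i = (e,d)" "e \<in> pairsK V" "d \<in> {1..r}" unfolding I_def by auto
    show "0 \<le> X i"
    proof (cases "e \<in> E")
      case True thus ?thesis using P i unfolding X_def by auto
    next
      case False thus ?thesis using P i unfolding X_def by auto
    qed
  qed
  define J1 :: "(('a set \<times> nat \<Rightarrow> real) \<times> real) set"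
    where "J1 = (\<lambda>e. ((\<lambda>i. if fst i = e then 1 else 0), 1)) ` E"
  define J2 :: "(('a set \<times> nat \<Rightarrow> real) \<times> real) set"
    where "J2 = (\<lambda>p. ((\<lambda>i. if snd i = fst p \<and> snd p \<in> fst i then 1 else 0), 1)) ` ({1..r} \<times> V)"
  define J3 :: "(('a set \<times> nat \<Rightarrow> real) \<times> real) set"
    where "J3 = (\<lambda>i0. ((\<lambda>i. if i = i0 then 1 else 0), 0)) ` {i\<in>I. X i = 0}"
  define J where "J = J1 \<union> J2 \<union> J3"
  have finJ: "finite J" unfolding J_def J1_def J2_def J3_def using finE finV finI by simp
  have ratJ: "\<forall>j\<in>J. (\<forall>i. fst j i \<in> \<rat>) \<and> snd j \<in> \<rat>" unfolding J_def J1_def J2_def J3_def by auto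
  have solJ: "(\<forall>j\<in>J. (\<Sum>i\<in>I. fst j i * G i) = snd j) \<longleftrightarrow>
     (\<forall>e\<in>E. (\<Sum>d\<in>{1..r}. G (e,d)) = 1) \<and>
     (\<forall>d\<in>{1..r}. \<forall>a\<in>V. (\<Sum>b\<in>V-{a}. G ({a,b},d)) = 1) \<and>
     (\<forall>i\<in>I. X i = 0 \<longrightarrow> G i = 0)" for G
  proof -
    have G1: "\<And>e. e \<in> E \<Longrightarrow> (\<Sum>i\<in>I. (if fst i = e then 1 else 0) * G i) = (\<Sum>d\<in>{1..r}. G (e,d))"
      using sumI1[OF finV, where g = "\<lambda>e d. G (e,d)"] EK unfolding I_def by auto
    have G2: "\<And>d a. d \<in> {1..r} \<Longrightarrow> a \<in> V \<Longrightarrow>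
        (\<Sum>i\<in>I. (if snd i = d \<and> a \<in> fst i then 1 else 0) * G i) = (\<Sum>b\<in>V-{a}. G ({a,b},d))"
      using sumI2[OF finV, where g = "\<lambda>e d. G (e,d)"] unfolding I_def by simp
    have G3: "\<And>i0. i0 \<in> I \<Longrightarrow> (\<Sum>i\<in>I. (if i = i0 then 1 else 0) * G i) = G i0"
      using sumI3[OF finI] by blast
    have s1: "(\<forall>j\<in>J1. (\<Sum>i\<in>I. fst j i * G i) = snd j) \<longleftrightarrow> (\<forall>e\<in>E. (\<Sum>d\<in>{1..r}. G (e,d)) = 1)"
      unfolding J1_def by (auto simp: G1)
    have s2: "(\<forall>j\<in>J2. (\<Sum>i\<in>I. fst j i * G i) = snd j) \<longleftrightarrow> (\<forall>d\<in>{1..r}. \<forall>a\<in>V. (\<Sum>b\<in>V-{a}. G ({a,b},d)) = 1)"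
      unfolding J2_def by (auto simp: G2)
    have s3: "(\<forall>j\<in>J3. (\<Sum>i\<in>I. fst j i * G i) = snd j) \<longleftrightarrow> (\<forall>i\<in>I. X i = 0 \<longrightarrow> G i = 0)"
      unfolding J3_def by (auto simp: G3)
    show ?thesis unfolding J_def ball_Un s1 s2 s3 by blast
  qed
  have XJ: "\<forall>j\<in>J. (\<Sum>i\<in>I. fst j i * X i) = snd j"
    unfolding solJ using P unfolding X_def by auto
  define \<epsilon> where "\<epsilon> = Min (insert 1 (X ` {i\<in>I. X i > 0}))"
  have finEps: "finite (insert 1 (X ` {i\<in>I. X i > 0}))" using finI by simp
  have eps0: "\<epsilon> > 0" unfolding \<epsilon>_def using finEps by (subst Min_gr_iff) auto
  have epsle: "\<forall>i\<in>I. X i > 0 \<longrightarrow> \<epsilon> \<le> X i" unfolding \<epsilon>_def using finEps by (auto intro: Min_le)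
  obtain Y where Y: "\<forall>i. Y i \<in> \<rat>" "\<forall>i\<in>I. \<bar>Y i - X i\<bar> < \<epsilon>" "\<forall>j\<in>J. (\<Sum>i\<in>I. fst j i * Y i) = snd j"
    using rat_approx[OF finI finJ ratJ XJ eps0] by blast
  have Ysol: "(\<forall>e\<in>E. (\<Sum>d\<in>{1..r}. Y (e,d)) = 1) \<and>
     (\<forall>d\<in>{1..r}. \<forall>a\<in>V. (\<Sum>b\<in>V-{a}. Y ({a,b},d)) = 1) \<and>
     (\<forall>i\<in>I. X i = 0 \<longrightarrow> Y i = 0)" using Y(3) unfolding solJ .
  have Ynn: "\<forall>i\<in>I. 0 \<le> Y i"
  proof
    fix i assume i: "i \<in> I"
    show "0 \<le> Y i"
    proof (cases "X i = 0")
      case True thus ?thesis using Ysol i by simp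
    next
      case False
      hence "X i > 0" using Xnn i by force
      hence "\<epsilon> \<le> X i" using epsle i by blast
      thus ?thesis using Y(2) i by force
    qed
  qed
  define y where "y = (\<lambda>e d. if (e,d) \<in> I then Y (e,d) else 0)"
  have yY: "\<And>e d. (e,d) \<in> I \<Longrightarrow> y e d = Y (e,d)" unfolding y_def by simp
  have yrat: "\<forall>e d. y e d \<in> \<rat>" using Y(1) unfolding y_def by simp
  have ynn: "\<forall>e d. 0 \<le> y e d" using Ynn unfolding y_def by simp
  have yout: "\<forall>e d. (e,d) \<notin> pairsK V \<times> {1..r} \<longrightarrow> y e d = 0" unfolding y_def I_def by simp
  have y1: "\<forall>e\<in>E. (\<Sum>d=1..r. y e d) = 1"
  proof
    fix e assume e: "e \<in> E"
    have "(\<Sum>d=1..r. y e d) = (\<Sum>d=1..r. Y (e,d))" using e EK yY unfolding I_def by (intro sum.cong) auto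
    thus "(\<Sum>d=1..r. y e d) = 1" using Ysol e by simp
  qed
  have y0: "\<forall>i\<in>I. X i = 0 \<longrightarrow> y (fst i) (snd i) = 0" using Ysol yY by auto
  have y2: "\<forall>e\<in>pairsK V - E. \<forall>d\<in>{1..r}. y e d = 0"
    using y0 P unfolding I_def X_def by auto
  have y3: "\<forall>d\<in>{1..r}. \<forall>a\<in>V. (\<Sum>b\<in>V - {a}. y {a, b} d) = 1"
  proof (intro ballI)
    fix d a assume d: "d \<in> {1..r}" and a: "a \<in> V"
    have "(\<Sum>b\<in>V - {a}. y {a, b} d) = (\<Sum>b\<in>V - {a}. Y ({a, b}, d))"
      using d a yY unfolding I_def pairsK_def by (intro sum.cong) auto
    thus "(\<Sum>b\<in>V - {a}. y {a, b} d) = 1" using Ysol d a by simp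
  qed
  have y4: "\<forall>e\<in>E. \<forall>d\<in>{1..r}. 0 \<le> y e d \<and> y e d \<le> 1"
  proof (intro ballI)
    fix e d assume e: "e \<in> E" and d: "d \<in> {1..r}"
    have "y e d \<le> (\<Sum>d=1..r. y e d)" using ynn d by (intro member_le_sum) auto
    thus "0 \<le> y e d \<and> y e d \<le> 1" using ynn y1 e by auto
  qed
  have y5: "\<forall>a b d. {a, b} \<in> E \<and> d \<in> {1..r} \<and>
        ((a \<in> H d \<and> b \<in> H d) \<or> (a \<in> A d \<and> b \<in> A d)) \<longrightarrow> y {a, b} d = 0"
  proof (intro allI impI)
    fix a b d assume h: "{a, b} \<in> E \<and> d \<in> {1..r} \<and> ((a \<in> H d \<and> b \<in> H d) \<or> (a \<in> A d \<and> b \<in> A d))"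
    have "x {a,b} d = 0" using P h by blast
    moreover have "({a,b},d) \<in> I" using h EK unfolding I_def by auto
    ultimately show "y {a, b} d = 0" using y0 unfolding X_def by force
  qed
  have "y \<in> P_GHA V E r H A"
    unfolding P_GHA_def
    apply (intro CollectI conjI)
    subgoal using y1 by blast
    subgoal using y2 by blast
    subgoal using y3 by blast
    subgoal using y4 by blast
    subgoal using y5 by blast
    done
  thus ?thesis using yrat ynn yout by blast
qed




lemma int_point:
  fixes V :: "'a set" and E :: "'a set set" and r :: nat
    and H A :: "nat \<Rightarrow> 'a set"
  assumes finV: "finite V" and reg: "regular_graph V E r" and hap: "HAP_table V r H A"
    and yP: "y \<in> P_GHA V E r H A" and yrat: "\<forall>e d. y e d \<in> \<rat>" and ynn: "\<forall>e d. 0 \<le> y e d"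
    and yout: "\<forall>e d. (e,d) \<notin> pairsK V \<times> {1..r} \<longrightarrow> y e d = 0"
  shows "\<exists>v \<in> Nbar V (PM V).
       (\<forall>e \<in> pairsK V. v (Inl e) = (if e \<in> E then 1 else 0)) \<and>
       (\<forall>c \<in> eq_parts V. v (Inr c) = card {d \<in> {1..r}. {H d, A d} = c})"
proof -
  note P = yP[unfolded P_GHA_def mem_Collect_eq]
  define I where "I = pairsK V \<times> {1..r}"
  have finI: "finite I" unfolding I_def using finite_pairsK[OF finV] by simp
  have EK: "E \<subseteq> pairsK V" using reg unfolding regular_graph_def by blast
  obtain k :: nat where k: "k \<ge> 1" "\<forall>q\<in>(\<lambda>i. y (fst i) (snd i)) ` I. \<exists>n::int. real k * q = of_int n"
    using common_denom[of "(\<lambda>i. y (fst i) (snd i)) ` I"] finI yrat by auto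
  have kint: "\<forall>e d. \<exists>n::int. real k * y e d = of_int n"
  proof (intro allI)
    fix e d
    show "\<exists>n::int. real k * y e d = of_int n"
    proof (cases "(e,d) \<in> I")
      case True thus ?thesis using k(2) by force
    next
      case False thus ?thesis using yout unfolding I_def by (intro exI[of _ 0]) auto
    qed
  qed
  define w where "w = (\<lambda>e d. nat \<lfloor>real k * y e d\<rfloor>)"
  have wy: "\<And>e d. real (w e d) = real k * y e d"
  proof -
    fix e d
    obtain n :: int where n: "real k * y e d = of_int n" using kint by blast
    have "n \<ge> 0" using n ynn by (metis of_int_0_le_iff mult_nonneg_nonneg of_nat_0_le_iff)
    thus "real (w e d) = real k * y e d" unfolding w_def n by simp
  qed
  define D where "D = {1..r}"
  define cc where "cc = (\<lambda>d. {H d, A d})"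
  have ccE: "\<forall>d\<in>D. cc d \<in> eq_parts V" using hap unfolding HAP_table_def cc_def D_def by blast
  have dec: "\<forall>d\<in>D. \<exists>qs. (\<forall>j<k. perfect_matching_of V {H d, A d} (qs j)) \<and>
      (\<forall>a\<in>V. \<forall>b\<in>V. a\<noteq>b \<longrightarrow> w {a,b} d = card {j. j<k \<and> {a,b} \<in> qs j})"
  proof
    fix d assume d: "d \<in> D"
    have HA: "H d \<inter> A d = {}" "H d \<union> A d = V" using hap d unfolding HAP_table_def D_def by auto
    have cHA: "card (H d) = card (A d)" using eq_parts_HA[OF _ HA] ccE d unfolding cc_def by blast
    have deg: "\<forall>a\<in>V. (\<Sum>b\<in>V-{a}. w {a,b} d) = k"
    proof
      fix a assume a: "a \<in> V"
      have "real (\<Sum>b\<in>V-{a}. w {a,b} d) = (\<Sum>b\<in>V-{a}. real k * y {a,b} d)" by (simp add: wy)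
      also have "\<dots> = real k * (\<Sum>b\<in>V-{a}. y {a,b} d)" by (simp add: sum_distrib_left)
      also have "\<dots> = real k" using P a d unfolding D_def by simp
      finally show "(\<Sum>b\<in>V-{a}. w {a,b} d) = k" by (simp only: of_nat_eq_iff)
    qed
    have side: "\<forall>a\<in>V. \<forall>b\<in>V. 0 < w {a,b} d \<longrightarrow> (a\<in>H d \<and> b\<in>A d) \<or> (a\<in>A d \<and> b\<in>H d)"
    proof (intro ballI impI)
      fix a b assume a: "a \<in> V" and b: "b \<in> V" and pos: "0 < w {a,b} d"
      have "y {a,b} d \<noteq> 0" using pos wy[of "{a,b}" d] by auto
      hence inI: "({a,b},d) \<in> pairsK V \<times> {1..r}" using yout by blast
      hence ab: "a \<noteq> b" unfolding pairsK_def by (auto simp: doubleton_eq_iff)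
      have "{a,b} \<in> E"
      proof (rule ccontr)
        assume "{a,b} \<notin> E"
        hence "y {a,b} d = 0" using P inI by blast
        thus False using \<open>y {a,b} d \<noteq> 0\<close> by simp
      qed
      hence "\<not> ((a \<in> H d \<and> b \<in> H d) \<or> (a \<in> A d \<and> b \<in> A d))"
        using P inI \<open>y {a,b} d \<noteq> 0\<close> by auto
      thus "(a\<in>H d \<and> b\<in>A d) \<or> (a\<in>A d \<and> b\<in>H d)" using a b HA by blast
    qed
    show "\<exists>qs. (\<forall>j<k. perfect_matching_of V {H d, A d} (qs j)) \<and>
      (\<forall>a\<in>V. \<forall>b\<in>V. a\<noteq>b \<longrightarrow> w {a,b} d = card {j. j<k \<and> {a,b} \<in> qs j})"
      using decomp[OF finV HA cHA, of "\<lambda>e. w e d" k] deg side by blast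
  qed
  then obtain Q where Q: "\<forall>d\<in>D. (\<forall>j<k. perfect_matching_of V {H d, A d} (Q d j)) \<and>
      (\<forall>a\<in>V. \<forall>b\<in>V. a\<noteq>b \<longrightarrow> w {a,b} d = card {j. j<k \<and> {a,b} \<in> Q d j})"
    by metis
  define v :: "'a vec" where "v = case_sum (\<lambda>e. if e \<in> pairsK V \<and> e \<in> E then 1 else 0)
      (\<lambda>c. if c \<in> eq_parts V then card {d \<in> {1..r}. {H d, A d} = c} else 0)"
  define T where "T = (\<lambda>i. \<Sum>p\<in>D \<times> {..<k}. chiEc V (Q (fst p) (snd p)) (cc (fst p)) i)"
  have TN: "T \<in> Ncomb (PM V)" unfolding T_def
  proof (rule Ncomb_sum)
    show "finite (D \<times> {..<k})" unfolding D_def by simp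
    show "\<forall>p\<in>D \<times> {..<k}. chiEc V (Q (fst p) (snd p)) (cc (fst p)) \<in> PM V"
      using Q ccE unfolding PM_def cc_def by fastforce
  qed
  have Tsplit: "\<And>i. T i = (\<Sum>d\<in>D. \<Sum>j<k. chiEc V (Q d j) (cc d) i)"
    unfolding T_def by (simp add: sum.cartesian_product split_beta)
  have kvT: "(\<lambda>i. k * v i) = T"
  proof
    fix i show "k * v i = T i"
    proof (cases i)
      case (Inl e)
      show ?thesis
      proof (cases "e \<in> pairsK V")
        case True
        then obtain a b where ab: "a \<in> V" "b \<in> V" "a \<noteq> b" "e = {a,b}" unfolding pairsK_def by blast
        have "T i = (\<Sum>d\<in>D. \<Sum>j<k. if e \<in> Q d j then 1 else 0)"
          unfolding Tsplit Inl using True by (simp add: chiEc_Inl)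
        also have "\<dots> = (\<Sum>d\<in>D. card {j\<in>{..<k}. e \<in> Q d j})" by (simp add: sum_if_card)
        also have "\<dots> = (\<Sum>d\<in>D. w e d)"
        proof (rule sum.cong[OF refl])
          fix d assume "d \<in> D"
          hence "w e d = card {j. j<k \<and> e \<in> Q d j}" using Q ab by blast
          moreover have "{j\<in>{..<k}. e \<in> Q d j} = {j. j<k \<and> e \<in> Q d j}" by auto
          ultimately show "card {j\<in>{..<k}. e \<in> Q d j} = w e d" by simp
        qed
        finally have Te: "T i = (\<Sum>d\<in>D. w e d)" .
        have "real (\<Sum>d\<in>D. w e d) = real k * (\<Sum>d\<in>D. y e d)" by (simp add: wy sum_distrib_left)
        also have "(\<Sum>d\<in>D. y e d) = (if e \<in> E then 1 else 0)"
        proof (cases "e \<in> E")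
          case True thus ?thesis using P unfolding D_def by simp
        next
          case False thus ?thesis using P True unfolding D_def by simp
        qed
        finally have "real (\<Sum>d\<in>D. w e d) = real k * (if e \<in> E then 1 else 0)" .
        hence "real (\<Sum>d\<in>D. w e d) = real (k * (if e \<in> E then 1 else 0))" by simp
        hence "(\<Sum>d\<in>D. w e d) = k * (if e \<in> E then 1 else 0)" by (simp only: of_nat_eq_iff)
        thus ?thesis using Te True unfolding Inl v_def by simp
      next
        case False
        have "T i = 0" unfolding Tsplit Inl using False by (simp add: chiEc_Inl)
        thus ?thesis using False unfolding Inl v_def by simp
      qed
    next
      case (Inr c)
      have "T i = (\<Sum>d\<in>D. \<Sum>j<k. if c \<in> eq_parts V \<and> c = cc d then 1 else 0)"
        unfolding Tsplit Inr by (simp add: chiEc_Inr)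
      also have "\<dots> = (\<Sum>d\<in>D. k * (if c \<in> eq_parts V \<and> c = cc d then 1 else 0))" by simp
      also have "\<dots> = k * (\<Sum>d\<in>D. if c \<in> eq_parts V \<and> c = cc d then 1 else 0)" by (simp add: sum_distrib_left)
      also have "(\<Sum>d\<in>D. if c \<in> eq_parts V \<and> c = cc d then 1 else 0) = card {d\<in>D. c \<in> eq_parts V \<and> c = cc d}"
        unfolding D_def by (rule sum_if_card) simp
      also have "card {d\<in>D. c \<in> eq_parts V \<and> c = cc d} = (if c \<in> eq_parts V then card {d \<in> {1..r}. {H d, A d} = c} else 0)"
      proof (cases "c \<in> eq_parts V")
        case True
        have "{d\<in>D. c \<in> eq_parts V \<and> c = cc d} = {d \<in> {1..r}. {H d, A d} = c}" using True unfolding D_def cc_def by auto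
        thus ?thesis using True by simp
      qed simp
      finally show ?thesis unfolding Inr v_def by simp
    qed
  qed
  have isv: "is_vec V v"
    unfolding is_vec_def coordsKC_def v_def by (auto split: sum.splits)
  have "v \<in> Nbar V (PM V)" unfolding Nbar_def using isv k(1) TN kvT by auto
  moreover have "\<forall>e \<in> pairsK V. v (Inl e) = (if e \<in> E then 1 else 0)" unfolding v_def by simp
  moreover have "\<forall>c \<in> eq_parts V. v (Inr c) = card {d \<in> {1..r}. {H d, A d} = c}" unfolding v_def by simp
  ultimately show ?thesis by blast
qed



theorem mainTheorem2:
  fixes V :: "'a set" and E :: "'a set set" and r :: nat
    and H A :: "nat \<Rightarrow> 'a set"
  assumes "finite V" and "even (card V)"
    and "regular_graph V E r"
    and "HAP_table V r H A"
  shows "P_GHA V E r H A \<noteq> {} \<longleftrightarrow>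
    (\<exists>v \<in> Nbar V (PM V).
       (\<forall>e \<in> pairsK V. v (Inl e) = (if e \<in> E then 1 else 0)) \<and>
       (\<forall>c \<in> eq_parts V. v (Inr c) = card {d \<in> {1..r}. {H d, A d} = c}))"
proof
  assume "P_GHA V E r H A \<noteq> {}"
  then obtain x where "x \<in> P_GHA V E r H A" by blast
  then obtain y where y: "y \<in> P_GHA V E r H A" "\<forall>e d. y e d \<in> \<rat>" "\<forall>e d. 0 \<le> y e d"
      "\<forall>e d. (e,d) \<notin> pairsK V \<times> {1..r} \<longrightarrow> y e d = 0"
    using rat_point[OF assms(1,3)] by blast
  show "\<exists>v \<in> Nbar V (PM V).
       (\<forall>e \<in> pairsK V. v (Inl e) = (if e \<in> E then 1 else 0)) \<and>
       (\<forall>c \<in> eq_parts V. v (Inr c) = card {d \<in> {1..r}. {H d, A d} = c})"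
    by (rule int_point[OF assms(1,3,4) y])
next
  assume "\<exists>v \<in> Nbar V (PM V).
       (\<forall>e \<in> pairsK V. v (Inl e) = (if e \<in> E then 1 else 0)) \<and>
       (\<forall>c \<in> eq_parts V. v (Inr c) = card {d \<in> {1..r}. {H d, A d} = c})"
  then obtain v where v: "v \<in> Nbar V (PM V)"
    "\<forall>e \<in> pairsK V. v (Inl e) = (if e \<in> E then 1 else 0)"
    "\<forall>c \<in> eq_parts V. v (Inr c) = card {d \<in> {1..r}. {H d, A d} = c}" by blast
  show "P_GHA V E r H A \<noteq> {}" by (rule dir2[OF assms(1,3,4) v])
qed

end
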